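(* Let $s\ge1$, $n=2s$, and let $A$ be the $n\times n$ matrix with $A_{ij}=1$ if $|i-j|\le s-1$ and $A_{ij}=0$ otherwise. Label the eigenvalues of $A$ so that $|\lambda_1(A)|\ge|\lambda_2(A)|\ge\dots\ge|\lambda_n(A)|$. Then \[ |\lambda_2(A)|=\frac{1}{\sqrt{2+2\cos\left(\frac{2s\pi}{2s+1}\right)}}, \] with corresponding eigenvector $u=[u_j]$, where $u_j=\cos\left(\frac{(2j-1)\pi}{4s+2}\right)$ for $j=1,\dots,s$ and $u_j=-u_{n-j+1}$ for $j=s+1,\dots,n$.
   Context: $A$ is the symmetric banded 0/1 matrix of even order $n=2s$ whose first row has exactly $s$ entries equal to $1$ (the model matrix of the random linear graph is $p(A-I)$). *)

theory Defs
  imports Complex_Main "Jordan_Normal_Form.Char_Poly"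
begin

definition band_mat :: "nat \<Rightarrow> real mat" where
  "band_mat s = mat (2*s) (2*s)
     (\<lambda>(i,j). if \<bar>int i - int j\<bar> \<le> int s - 1 then 1 else 0)"

text \<open>A labeling of the eigenvalues (with algebraic multiplicity, over the complex
  numbers) of a square real matrix in order of non-increasing modulus:
  ls ! 0 = lambda_1, ls ! 1 = lambda_2, ...\<close>
definition eigen_labeling :: "real mat \<Rightarrow> complex list \<Rightarrow> bool" where
  "eigen_labeling A ls \<longleftrightarrow>
     length ls = dim_row A \<and>
     char_poly (map_mat complex_of_real A) = (\<Prod>a\<leftarrow>ls. [:- a, 1:]) \<and>
     sorted_wrt (\<lambda>a b. cmod a \<ge> cmod b) ls"

text \<open>The vector u (0-based): u_k = cos((2k+1) pi/(4s+2)) for k < s, and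
  u_k = - u_(n-1-k) for s <= k < n (1-based: u_j = cos((2j-1)pi/(4s+2)), u_j = -u_(n-j+1)).\<close>
definition band_u_base :: "nat \<Rightarrow> nat \<Rightarrow> real" where
  "band_u_base s k = cos (real (2*k+1) * pi / real (4*s+2))"

definition band_u :: "nat \<Rightarrow> real vec" where
  "band_u s = vec (2*s)
     (\<lambda>k. if k < s then band_u_base s k else - band_u_base s (2*s - 1 - k))"

end

theory Submission
  imports Defs "Jordan_Normal_Form.Schur_Decomposition"
begin

lemma two_sin_cos: "2 * sin (x::real) * cos y = sin (y + x) - sin (y - x)"
  by (simp add: sin_add sin_diff)

definition uf :: "nat \<Rightarrow> real \<Rightarrow> nat \<Rightarrow> real" where
  "uf s t j = (if j < s then cos (real (2*j+1) * t) else - cos (real (2*(2*s-1-j)+1) * t))"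

lemma uf_alt:
  assumes ht: "real (4*s+2) * t = pi" and j: "s \<le> j" "j < 2*s"
  shows "uf s t j = cos (real (2*j+3) * t)"
proof -
  have "real (2*(2*s-1-j)+1) * t = pi - real (2*j+3) * t"
    using j ht[symmetric] by (simp add: of_nat_diff algebra_simps)
  then show ?thesis using j by (simp add: uf_def)
qed

lemma sin_sym:
  assumes ht: "real (4*s+2) * t = pi"
  shows "sin (real (2*s) * t) = sin (real (2*s+2) * t)"
proof -
  have "real (2*s) * t = pi - real (2*s+2) * t" using ht[symmetric] by (simp add: algebra_simps)
  then show ?thesis by simp
qed

lemma partial_sum:
  assumes ht: "real (4*s+2) * t = pi" and m: "m \<le> 2*s"
  shows "2 * sin t * (\<Sum>j<m. uf s t j) =
    (if m \<le> s then sin (real (2*m) * t) else sin (real (2*m+2) * t))"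
  using m
proof (induction m)
  case 0
  then show ?case by simp
next
  case (Suc m)
  then have IH: "2 * sin t * (\<Sum>j<m. uf s t j) =
    (if m \<le> s then sin (real (2*m) * t) else sin (real (2*m+2) * t))" by simp
  have split: "2 * sin t * (\<Sum>j<Suc m. uf s t j) = 2 * sin t * (\<Sum>j<m. uf s t j) + 2 * sin t * uf s t m"
    by (simp add: algebra_simps)
  show ?case
  proof (cases "m < s")
    case True
    have "2 * sin t * uf s t m = sin (real (2*m+1) * t + t) - sin (real (2*m+1) * t - t)"
      using True by (simp add: uf_def two_sin_cos)
    also have "real (2*m+1) * t + t = real (2 * Suc m) * t" by (simp add: algebra_simps)
    also have "real (2*m+1) * t - t = real (2 * m) * t" by (simp add: algebra_simps)
    finally show ?thesis using True IH split by simp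
  next
    case False
    have u: "uf s t m = cos (real (2*m+3) * t)" using False Suc.prems by (intro uf_alt[OF ht]) auto
    have "2 * sin t * uf s t m = sin (real (2*m+3) * t + t) - sin (real (2*m+3) * t - t)"
      using u by (simp add: two_sin_cos)
    also have "real (2*m+3) * t + t = real (2 * Suc m + 2) * t" by (simp add: algebra_simps)
    also have "real (2*m+3) * t - t = real (2 * m + 2) * t" by (simp add: algebra_simps)
    finally have e: "2 * sin t * uf s t m = sin (real (2 * Suc m + 2) * t) - sin (real (2 * m + 2) * t)" .
    show ?thesis
    proof (cases "m = s")
      case True
      then show ?thesis using IH split e sin_sym[OF ht] by simp
    next
      case False
      then show ?thesis using IH split e \<open>\<not> m < s\<close> by simp
    qed
  qed
qed

definition aa :: "nat \<Rightarrow> nat \<Rightarrow> nat \<Rightarrow> real" where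
  "aa s i j = (if \<bar>int i - int j\<bar> \<le> int s - 1 then 1 else 0)"

lemma uf_flip: "j < 2*s \<Longrightarrow> uf s t j = - uf s t (2*s-1-j)"
  by (auto simp: uf_def)

lemma aa_flip: "k < 2*s \<Longrightarrow> j < 2*s \<Longrightarrow> aa s k j = aa s (2*s-1-k) (2*s-1-j)"
  by (auto simp: aa_def)

lemma row_lo:
  assumes ht: "real (4*s+2) * t = pi" and k: "k < s"
  shows "2 * sin t * (\<Sum>j<2*s. aa s k j * uf s t j) = uf s t k"
proof -
  have "(\<Sum>j<2*s. aa s k j * uf s t j) = (\<Sum>j<2*s. if j < k + s then uf s t j else 0)"
    using k by (intro sum.cong) (auto simp: aa_def)
  also have "\<dots> = (\<Sum>j\<in>{j\<in>{..<2*s}. j < k+s}. uf s t j)"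
    by (subst sum.inter_filter) auto
  also have "{j\<in>{..<2*s}. j < k+s} = {..<k+s}" using k by auto
  finally have e: "(\<Sum>j<2*s. aa s k j * uf s t j) = (\<Sum>j<k+s. uf s t j)" .
  have "2 * sin t * (\<Sum>j<k+s. uf s t j) = sin (real (2*(k+s)+2) * t)"
    using partial_sum[OF ht, of "k+s"] k sin_sym[OF ht] by (cases "k = 0") auto
  also have "real (2*(k+s)+2) * t = pi/2 + real (2*k+1) * t"
    using ht by (simp add: algebra_simps)
  also have "sin (pi/2 + real (2*k+1) * t) = cos (real (2*k+1) * t)"
    by (simp add: sin_add)
  finally show ?thesis using e k by (simp add: uf_def)
qed

lemma row_all:
  assumes ht: "real (4*s+2) * t = pi" and k: "k < 2*s"
  shows "2 * sin t * (\<Sum>j<2*s. aa s k j * uf s t j) = uf s t k"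
proof (cases "k < s")
  case True
  then show ?thesis using row_lo[OF ht] by simp
next
  case False
  define k' where "k' = 2*s-1-k"
  have k': "k' < s" using False k unfolding k'_def by auto
  have "(\<Sum>j<2*s. aa s k j * uf s t j) = (\<Sum>j<2*s. - (aa s k' (2*s - Suc j) * uf s t (2*s - Suc j)))"
    by (intro sum.cong refl) (metis aa_flip uf_flip k k'_def diff_Suc_eq_diff_pred mult_minus_right
       lessThan_iff One_nat_def)
  also have "\<dots> = - (\<Sum>j<2*s. aa s k' j * uf s t j)"
    by (simp add: sum_negf sum.nat_diff_reindex[where g = "\<lambda>j. aa s k' j * uf s t j"])
  finally have "2 * sin t * (\<Sum>j<2*s. aa s k j * uf s t j) = - uf s t k'"
    using row_lo[OF ht k'] by simp
  also have "\<dots> = uf s t k" using uf_flip[OF k] k unfolding k'_def by simp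
  finally show ?thesis .
qed

lemma aa_sym: "aa s i j = aa s j i"
  by (auto simp: aa_def)

lemma aa_nonneg: "aa s i j \<ge> 0"
  by (auto simp: aa_def)

lemma aa_diag: "s \<ge> 1 \<Longrightarrow> aa s i i = 1"
  by (auto simp: aa_def)

lemma aa_sq: "(aa s i j)\<^sup>2 = aa s i j"
  by (auto simp: aa_def)

fun Mp :: "nat \<Rightarrow> nat \<Rightarrow> nat \<Rightarrow> nat \<Rightarrow> real" where
  "Mp s 0 i j = (if i = j then 1 else 0)"
| "Mp s (Suc k) i j = (\<Sum>l<2*s. Mp s k i l * aa s l j)"

lemma sum_delta_l: "finite A \<Longrightarrow> i \<in> A \<Longrightarrow> (\<Sum>l\<in>A. (if i = l then 1 else 0) * (f l :: real)) = f i"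
proof -
  assume "finite A" "i \<in> A"
  have "(\<Sum>l\<in>A. (if i = l then 1 else 0) * f l) = (\<Sum>l\<in>A. if l = i then f i else 0)"
    by (rule sum.cong) auto
  then show ?thesis using \<open>finite A\<close> \<open>i \<in> A\<close> by (simp add: sum.delta)
qed

lemma sum_delta_r: "finite A \<Longrightarrow> j \<in> A \<Longrightarrow> (\<Sum>l\<in>A. (f l :: real) * (if l = j then 1 else 0)) = f j"
proof -
  assume "finite A" "j \<in> A"
  have "(\<Sum>l\<in>A. f l * (if l = j then 1 else 0)) = (\<Sum>l\<in>A. if l = j then f j else 0)"
    by (rule sum.cong) auto
  then show ?thesis using \<open>finite A\<close> \<open>j \<in> A\<close> by (simp add: sum.delta)
qed

lemma Mp_1: "i < 2*s \<Longrightarrow> Mp s 1 i j = aa s i j"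
  by (simp add: sum_delta_l)

lemma Mp_1': "i < 2*s \<Longrightarrow> Mp s (Suc 0) i j = aa s i j"
  by (simp add: sum_delta_l)

lemma Mp_add: "i < 2*s \<Longrightarrow> j < 2*s \<Longrightarrow>
    Mp s (k+m) i j = (\<Sum>l<2*s. Mp s k i l * Mp s m l j)"
proof (induction m arbitrary: j)
  case 0
  show ?case using 0 by (simp add: sum_delta_r)
next
  case (Suc m)
  have "Mp s (k + Suc m) i j = (\<Sum>l<2*s. Mp s (k+m) i l * aa s l j)" by simp
  also have "\<dots> = (\<Sum>l<2*s. (\<Sum>l'<2*s. Mp s k i l' * Mp s m l' l) * aa s l j)"
    using Suc.prems by (intro sum.cong refl) (simp add: Suc.IH)
  also have "\<dots> = (\<Sum>l<2*s. \<Sum>l'<2*s. Mp s k i l' * (Mp s m l' l * aa s l j))"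
    by (simp add: sum_distrib_right mult.assoc)
  also have "\<dots> = (\<Sum>l'<2*s. \<Sum>l<2*s. Mp s k i l' * (Mp s m l' l * aa s l j))"
    by (rule sum.swap)
  also have "\<dots> = (\<Sum>l'<2*s. Mp s k i l' * Mp s (Suc m) l' j)"
    by (simp add: sum_distrib_left)
  finally show ?case .
qed

lemma Mp_sym: "i < 2*s \<Longrightarrow> j < 2*s \<Longrightarrow> Mp s k i j = Mp s k j i"
proof (induction k arbitrary: i j)
  case 0
  then show ?case by simp
next
  case (Suc k)
  have "Mp s (Suc k) j i = Mp s (1 + k) j i" by simp
  also have "\<dots> = (\<Sum>l<2*s. Mp s 1 j l * Mp s k l i)"
    by (rule Mp_add[OF \<open>j < 2*s\<close> \<open>i < 2*s\<close>])
  also have "\<dots> = (\<Sum>l<2*s. Mp s k i l * aa s l j)"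
    using Suc.prems Suc.IH by (intro sum.cong refl) (simp add: Mp_1' aa_sym del: Mp.simps)
  finally show ?case by simp
qed

lemma Mp_nonneg: "Mp s k i j \<ge> 0"
  by (induction k arbitrary: j) (auto intro!: sum_nonneg mult_nonneg_nonneg aa_nonneg)

lemma Mp_diag: "s \<ge> 1 \<Longrightarrow> i < 2*s \<Longrightarrow> Mp s k i i \<ge> 1"
proof (induction k)
  case 0
  then show ?case by simp
next
  case (Suc k)
  have "Mp s k i i * aa s i i \<le> (\<Sum>l<2*s. Mp s k i l * aa s l i)"
    by (rule member_le_sum[where f = "\<lambda>l. Mp s k i l * aa s l i"])
       (use Suc.prems in \<open>auto intro!: mult_nonneg_nonneg Mp_nonneg aa_nonneg\<close>)
  then show ?case using Suc aa_diag[of s i] by simp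
qed

definition yv :: "nat \<Rightarrow> nat \<Rightarrow> nat \<Rightarrow> real" where
  "yv s k i = (\<Sum>j<2*s. Mp s k i j)"

definition ak :: "nat \<Rightarrow> nat \<Rightarrow> real" where
  "ak s k = (\<Sum>i<2*s. (yv s k i)\<^sup>2)"

lemma yv_Suc: "i < 2*s \<Longrightarrow> yv s (Suc k) i = (\<Sum>l<2*s. aa s i l * yv s k l)"
proof -
  assume i: "i < 2*s"
  have "yv s (Suc k) i = (\<Sum>j<2*s. Mp s (1+k) i j)" by (simp add: yv_def)
  also have "\<dots> = (\<Sum>j<2*s. \<Sum>l<2*s. Mp s 1 i l * Mp s k l j)"
    using i by (intro sum.cong refl) (rule Mp_add, auto)
  also have "\<dots> = (\<Sum>j<2*s. \<Sum>l<2*s. aa s i l * Mp s k l j)"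
    using i by (simp only: Mp_1)
  also have "\<dots> = (\<Sum>l<2*s. \<Sum>j<2*s. aa s i l * Mp s k l j)"
    by (rule sum.swap)
  also have "\<dots> = (\<Sum>l<2*s. aa s i l * yv s k l)"
    by (simp add: yv_def sum_distrib_left)
  finally show ?thesis .
qed

lemma ak_Suc: "ak s (Suc k) = (\<Sum>i<2*s. yv s k i * yv s (Suc (Suc k)) i)"
proof -
  have "ak s (Suc k) = (\<Sum>i<2*s. yv s (Suc k) i * (\<Sum>l<2*s. aa s i l * yv s k l))"
    unfolding ak_def by (intro sum.cong refl) (simp add: yv_Suc power2_eq_square)
  also have "\<dots> = (\<Sum>i<2*s. \<Sum>l<2*s. yv s k l * (aa s l i * yv s (Suc k) i))"
    by (simp add: sum_distrib_left aa_sym mult_ac)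
  also have "\<dots> = (\<Sum>l<2*s. \<Sum>i<2*s. yv s k l * (aa s l i * yv s (Suc k) i))"
    by (rule sum.swap)
  also have "\<dots> = (\<Sum>l<2*s. yv s k l * yv s (Suc (Suc k)) l)"
    by (intro sum.cong refl) (simp add: yv_Suc sum_distrib_left)
  finally show ?thesis .
qed

lemma cs_sum:
  fixes a b :: "nat \<Rightarrow> real"
  shows "(\<Sum>i\<in>I. a i * b i)\<^sup>2 \<le> (\<Sum>i\<in>I. (a i)\<^sup>2) * (\<Sum>i\<in>I. (b i)\<^sup>2)"
proof (cases "finite I")
  case False
  then show ?thesis by simp
next
  case fin: True
  show ?thesis
  proof (cases "(\<Sum>i\<in>I. (b i)\<^sup>2) = 0")
    case True
    then have "\<forall>i\<in>I. (b i)\<^sup>2 = 0" using fin by (subst sum_nonneg_eq_0_iff[symmetric]) auto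
    then show ?thesis by simp
  next
    case False
    then have B: "(\<Sum>i\<in>I. (b i)\<^sup>2) > 0" by (simp add: order_less_le sum_nonneg)
    define S where "S = (\<Sum>i\<in>I. (b i)\<^sup>2)"
    define T where "T = (\<Sum>i\<in>I. a i * b i)"
    define r where "r = T / S"
    have "0 \<le> (\<Sum>i\<in>I. (a i - r * b i)\<^sup>2)" by (simp add: sum_nonneg)
    also have "\<dots> = (\<Sum>i\<in>I. (a i)\<^sup>2) - 2 * r * T + r\<^sup>2 * S"
      unfolding S_def T_def
      by (simp add: algebra_simps power2_eq_square sum_distrib_left sum_subtractf sum.distrib)
    also have "\<dots> = (\<Sum>i\<in>I. (a i)\<^sup>2) - T\<^sup>2 / S"
      using B unfolding r_def S_def by (simp add: power2_eq_square field_simps)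
    finally have "T\<^sup>2 / S \<le> (\<Sum>i\<in>I. (a i)\<^sup>2)" by simp
    then show ?thesis using B unfolding S_def T_def by (simp add: pos_divide_le_eq)
  qed
qed

lemma cs_one:
  fixes a :: "nat \<Rightarrow> real"
  shows "(\<Sum>i<m. a i)\<^sup>2 \<le> real m * (\<Sum>i<m. (a i)\<^sup>2)"
  using cs_sum[of "\<lambda>_. 1" a "{..<m}"] by simp

lemma yv_ge: "s \<ge> 1 \<Longrightarrow> i < 2*s \<Longrightarrow> yv s k i \<ge> 1"
proof -
  assume s: "s \<ge> 1" and i: "i < 2*s"
  have "Mp s k i i \<le> yv s k i" unfolding yv_def
    by (rule member_le_sum[where f = "\<lambda>j. Mp s k i j"]) (use i in \<open>auto intro: Mp_nonneg\<close>)
  then show ?thesis using Mp_diag[OF s i, of k] by simp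
qed

lemma ak_pos: "s \<ge> 1 \<Longrightarrow> ak s k > 0"
proof -
  assume s: "s \<ge> 1"
  have "(yv s k 0)\<^sup>2 \<le> ak s k" unfolding ak_def
    by (rule member_le_sum[where f = "\<lambda>i. (yv s k i)\<^sup>2"]) (use s in auto)
  moreover have "(yv s k 0)\<^sup>2 \<ge> 1" using yv_ge[OF s, of 0 k] s
    by (simp add: one_le_power)
  ultimately show ?thesis by simp
qed

lemma ak_logconvex: "(ak s (Suc k))\<^sup>2 \<le> ak s k * ak s (Suc (Suc k))"
proof -
  have e: "ak s (Suc k) = (\<Sum>i<2*s. yv s k i * yv s (Suc (Suc k)) i)" by (rule ak_Suc)
  show ?thesis unfolding e using cs_sum[of "yv s k" "yv s (Suc (Suc k))" "{..<2*s}"] by (simp add: ak_def)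
qed

lemma ak_ratio:
  assumes s: "s \<ge> 1"
  shows "ak s (Suc k) \<ge> (ak s 1 / ak s 0) * ak s k"
proof (induction k)
  case 0
  then show ?case using ak_pos[OF s, of 0] by simp
next
  case (Suc k)
  let ?q = "ak s 1 / ak s 0"
  have p0: "ak s k > 0" "ak s (Suc k) > 0" using ak_pos[OF s] by auto
  have q0: "?q \<ge> 0" using ak_pos[OF s, of 0] ak_pos[OF s, of 1] by simp
  have h1: "(?q * ak s k) * ak s (Suc k) \<le> ak s (Suc k) * ak s (Suc k)"
    by (rule mult_right_mono[OF Suc.IH]) (use p0 in simp)
  have eq: "(?q * ak s (Suc k)) * ak s k = (?q * ak s k) * ak s (Suc k)" by (simp add: mult_ac)
  have "(?q * ak s (Suc k)) * ak s k \<le> ak s (Suc k) * ak s (Suc k)" unfolding eq by (rule h1)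
  also have "\<dots> \<le> ak s k * ak s (Suc (Suc k))"
    using ak_logconvex[of s k] by (simp add: power2_eq_square)
  finally have "(?q * ak s (Suc k)) * ak s k \<le> ak s (Suc (Suc k)) * ak s k"
    by (simp add: mult.commute)
  then have "?q * ak s (Suc k) \<le> ak s (Suc (Suc k))"
    by (rule mult_right_le_imp_le) (use p0 in simp)
  then show ?case by simp
qed

lemma ak_lower:
  assumes s: "s \<ge> 1"
  shows "ak s k \<ge> ak s 0 * (ak s 1 / ak s 0) ^ k"
proof (induction k)
  case 0
  then show ?case by simp
next
  case (Suc k)
  have q0: "ak s 1 / ak s 0 \<ge> 0" using ak_pos[OF s, of 0] ak_pos[OF s, of 1] by simp
  have "ak s 0 * (ak s 1 / ak s 0) ^ Suc k = (ak s 1 / ak s 0) * (ak s 0 * (ak s 1 / ak s 0) ^ k)"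
    by (simp add: mult_ac)
  also have "\<dots> \<le> (ak s 1 / ak s 0) * ak s k"
    using Suc.IH q0 by (rule mult_left_mono)
  also have "\<dots> \<le> ak s (Suc k)" using ak_ratio[OF s] by simp
  finally show ?case .
qed

lemma ak_upper:
  "ak s k \<le> real (2*s) * (\<Sum>i<2*s. Mp s (k+k) i i)"
proof -
  have "ak s k \<le> (\<Sum>i<2*s. real (2*s) * (\<Sum>j<2*s. (Mp s k i j)\<^sup>2))"
    unfolding ak_def yv_def by (intro sum_mono cs_one)
  also have "\<dots> = real (2*s) * (\<Sum>i<2*s. \<Sum>j<2*s. (Mp s k i j)\<^sup>2)"
    by (simp add: sum_distrib_left)
  also have "(\<Sum>i<2*s. \<Sum>j<2*s. (Mp s k i j)\<^sup>2) = (\<Sum>i<2*s. Mp s (k+k) i i)"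
    by (intro sum.cong refl, subst Mp_add) (auto intro!: sum.cong simp: power2_eq_square Mp_sym)
  finally show ?thesis .
qed

lemma ak0: "ak s 0 = real (2*s)"
proof -
  have "yv s 0 i = 1" if "i < 2*s" for i
    using that by (simp add: yv_def sum.delta)
  then show ?thesis by (simp add: ak_def)
qed

lemma sum_split_add:
  fixes f :: "nat \<Rightarrow> 'a::comm_monoid_add" and m n :: nat
  shows "sum f {..<m+n} = sum f {..<m} + (\<Sum>i<n. f (m+i))"
  by (induction n) (auto simp: add.assoc)

lemma rowsum:
  assumes i: "i < 2*s"
  shows "(\<Sum>j<2*s. aa s i j) = (if i < s then real i + real s else 3 * real s - 1 - real i)"
proof -
  have "(\<Sum>j<2*s. aa s i j) = (\<Sum>j<2*s. if \<bar>int i - int j\<bar> \<le> int s - 1 then 1 else 0)"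
    by (simp add: aa_def)
  also have "\<dots> = real (card {j\<in>{..<2*s}. \<bar>int i - int j\<bar> \<le> int s - 1})"
    by (subst sum.inter_filter[symmetric]) auto
  also have "\<dots> = (if i < s then real i + real s else 3 * real s - 1 - real i)"
  proof (cases "i < s")
    case True
    have "{j\<in>{..<2*s}. \<bar>int i - int j\<bar> \<le> int s - 1} = {..<i+s}" using True by auto
    then show ?thesis using True by simp
  next
    case False
    have "{j\<in>{..<2*s}. \<bar>int i - int j\<bar> \<le> int s - 1} = {i+1-s..<2*s}" using False i by auto
    then show ?thesis using False i by (simp add: of_nat_diff)
  qed
  finally show ?thesis .
qed

lemma Ntot:
  shows "(\<Sum>i<2*s. \<Sum>j<2*s. aa s i j) = 3 * (real s)\<^sup>2 - real s"
proof -
  have "(\<Sum>i<2*s. \<Sum>j<2*s. aa s i j) = (\<Sum>i<2*s. (if i < s then real i + real s else 3 * real s - 1 - real i))"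
    by (intro sum.cong refl) (rule rowsum, simp)
  also have "\<dots> = (\<Sum>i<s+s. (if i < s then real i + real s else 3 * real s - 1 - real i))"
    by (simp add: mult_2)
  also have "\<dots> = (\<Sum>i<s. real i + real s) + (\<Sum>i<s. 3 * real s - 1 - real (s+i))"
    by (simp add: sum_split_add)
  also have "\<dots> = (\<Sum>i<s. 3 * real s - 1)"
    by (simp add: sum.distrib[symmetric] algebra_simps)
  also have "\<dots> = 3 * (real s)\<^sup>2 - real s" by (simp add: algebra_simps power2_eq_square)
  finally show ?thesis .
qed

lemma ak1_lower:
  assumes s: "s \<ge> 1"
  shows "(3 * (real s)\<^sup>2 - real s)\<^sup>2 \<le> real (2*s) * ak s 1"
proof -
  have "(\<Sum>i<2*s. yv s 1 i) = (\<Sum>i<2*s. \<Sum>j<2*s. aa s i j)"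
    unfolding yv_def by (intro sum.cong refl) (simp add: Mp_1' del: Mp.simps)
  then have "(\<Sum>i<2*s. yv s 1 i) = 3 * (real s)\<^sup>2 - real s" using Ntot by simp
  then show ?thesis using cs_one[of "yv s 1" "2*s"] by (simp add: ak_def)
qed

lemma band_idx: "i < 2*s \<Longrightarrow> j < 2*s \<Longrightarrow> band_mat s $$ (i,j) = aa s i j"
  by (simp add: band_mat_def aa_def)

lemma Ac_idx: "i < 2*s \<Longrightarrow> j < 2*s \<Longrightarrow> map_mat complex_of_real (band_mat s) $$ (i,j) = complex_of_real (aa s i j)"
  by (simp add: band_mat_def aa_def)

lemma band_carrier: "band_mat s \<in> carrier_mat (2*s) (2*s)"
  by (simp add: band_mat_def)

lemma Ac_carrier: "map_mat complex_of_real (band_mat s) \<in> carrier_mat (2*s) (2*s)"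
  by (simp add: band_mat_def)

lemma Ac_pow:
  assumes "i < 2*s" "j < 2*s"
  shows "(map_mat complex_of_real (band_mat s) ^\<^sub>m k) $$ (i,j) = complex_of_real (Mp s k i j)"
  using assms
proof (induction k arbitrary: j)
  case 0
  then show ?case by (simp add: band_mat_def)
next
  case (Suc k)
  let ?A = "map_mat complex_of_real (band_mat s)"
  have c: "?A ^\<^sub>m k \<in> carrier_mat (2*s) (2*s)" using Ac_carrier by auto
  have "(?A ^\<^sub>m Suc k) $$ (i,j) = (?A ^\<^sub>m k * ?A) $$ (i,j)" by simp
  also have "\<dots> = (\<Sum>l\<in>{0..<2*s}. (?A ^\<^sub>m k) $$ (i,l) * ?A $$ (l,j))"
    using c Ac_carrier[of s] Suc.prems by (simp add: scalar_prod_def)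
  also have "\<dots> = (\<Sum>l\<in>{0..<2*s}. complex_of_real (Mp s k i l * aa s l j))"
    using Suc.prems Suc.IH by (intro sum.cong refl) (simp add: Ac_idx)
  also have "\<dots> = complex_of_real (Mp s (Suc k) i j)"
    by (simp add: atLeast0LessThan)
  finally show ?case .
qed

definition trc :: "'a::comm_ring_1 mat \<Rightarrow> 'a" where
  "trc M = (\<Sum>i<dim_row M. M $$ (i,i))"

lemma trc_comm:
  assumes A: "A \<in> carrier_mat n m" and B: "B \<in> carrier_mat m n"
  shows "trc (A * B) = trc (B * A)"
proof -
  have "trc (A * B) = (\<Sum>i<n. \<Sum>l<m. A $$ (i,l) * B $$ (l,i))"
    using A B by (simp add: trc_def scalar_prod_def atLeast0LessThan)
  also have "\<dots> = (\<Sum>l<m. \<Sum>i<n. B $$ (l,i) * A $$ (i,l))"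
    by (subst sum.swap) (simp add: mult.commute)
  also have "\<dots> = trc (B * A)"
    using A B by (simp add: trc_def scalar_prod_def atLeast0LessThan)
  finally show ?thesis .
qed

lemma trc_sim:
  assumes "similar_mat_wit A B P Q"
  shows "trc (A ^\<^sub>m k) = trc (B ^\<^sub>m k)"
proof -
  let ?n = "dim_row A"
  have c: "A \<in> carrier_mat ?n ?n" "B \<in> carrier_mat ?n ?n" "P \<in> carrier_mat ?n ?n"
    "Q \<in> carrier_mat ?n ?n" and QP: "Q * P = 1\<^sub>m ?n"
    using assms unfolding similar_mat_wit_def Let_def by blast+
  have Bk: "B ^\<^sub>m k \<in> carrier_mat ?n ?n" using c(2) by (rule pow_carrier_mat)
  have PB: "P * B ^\<^sub>m k \<in> carrier_mat ?n ?n" using c(3) Bk by (rule mult_carrier_mat)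
  have "A ^\<^sub>m k = P * B ^\<^sub>m k * Q" using similar_mat_wit_pow_id[OF assms] .
  then have "trc (A ^\<^sub>m k) = trc ((P * B ^\<^sub>m k) * Q)" by simp
  also have "\<dots> = trc (Q * (P * B ^\<^sub>m k))"
    by (rule trc_comm[OF PB c(4)])
  also have "Q * (P * B ^\<^sub>m k) = (Q * P) * B ^\<^sub>m k"
    by (rule assoc_mult_mat[symmetric, OF c(4) c(3) Bk])
  also have "\<dots> = B ^\<^sub>m k" unfolding QP by (rule left_mult_one_mat[OF Bk])
  finally show ?thesis .
qed

lemma ut_pow:
  assumes B: "B \<in> carrier_mat n n" and ut: "upper_triangular B"
  shows "upper_triangular (B ^\<^sub>m k) \<and> (\<forall>i<n. (B ^\<^sub>m k) $$ (i,i) = B $$ (i,i) ^ k)"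
proof (induction k)
  case 0
  then show ?case using B by (auto simp: upper_triangular_def)
next
  case (Suc k)
  let ?X = "B ^\<^sub>m k"
  have X: "?X \<in> carrier_mat n n" using B by simp
  have Xu: "\<And>i j. i < n \<Longrightarrow> j < i \<Longrightarrow> ?X $$ (i,j) = 0"
    using Suc.IH X by (auto simp: upper_triangular_def)
  have Bu: "\<And>i j. i < n \<Longrightarrow> j < i \<Longrightarrow> B $$ (i,j) = 0"
    using ut B by (auto simp: upper_triangular_def)
  have prod: "(?X * B) $$ (i,j) = (\<Sum>l<n. ?X $$ (i,l) * B $$ (l,j))" if "i < n" "j < n" for i j
    using X B that by (simp add: scalar_prod_def atLeast0LessThan)
  have "upper_triangular (?X * B)"
    unfolding upper_triangular_def
  proof (intro allI impI)
    fix i j assume i: "i < dim_row (?X * B)" and ji: "j < i"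
    then have i': "i < n" using B by simp
    have "(\<Sum>l<n. ?X $$ (i,l) * B $$ (l,j)) = 0"
    proof (rule sum.neutral, rule ballI)
      fix l assume "l \<in> {..<n}"
      then show "?X $$ (i,l) * B $$ (l,j) = 0"
        using Xu[OF i'] Bu ji by (cases "l < i") auto
    qed
    then show "(?X * B) $$ (i,j) = 0" using prod[OF i'] ji i' by simp
  qed
  moreover have "(?X * B) $$ (i,i) = B $$ (i,i) ^ Suc k" if i: "i < n" for i
  proof -
    have "(\<Sum>l<n. ?X $$ (i,l) * B $$ (l,i)) = (\<Sum>l<n. if l = i then ?X $$ (i,i) * B $$ (i,i) else 0)"
    proof (rule sum.cong[OF refl])
      fix l assume l: "l \<in> {..<n}"
      show "?X $$ (i,l) * B $$ (l,i) = (if l = i then ?X $$ (i,i) * B $$ (i,i) else 0)"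
        using Xu[OF i] Bu[of l i] l by (cases "l < i"; cases "l = i") auto
    qed
    also have "\<dots> = ?X $$ (i,i) * B $$ (i,i)" using i by simp
    finally show ?thesis using prod[OF i i] Suc.IH i by (simp add: power_commutes)
  qed
  ultimately show ?case by simp
qed

lemma band_dim: "dim_row (band_mat s) = 2*s" "dim_col (band_mat s) = 2*s"
  by (simp_all add: band_mat_def)

lemma labeling_trace:
  assumes L: "eigen_labeling (band_mat s) ls"
  shows "(\<Sum>i<2*s. (ls!i)^k) = complex_of_real (\<Sum>i<2*s. Mp s k i i)"
proof -
  let ?A = "map_mat complex_of_real (band_mat s)"
  have A: "?A \<in> carrier_mat (2*s) (2*s)" by (rule Ac_carrier)
  have cp: "char_poly ?A = (\<Prod>a\<leftarrow>ls. [:- a, 1:])" and len: "length ls = 2*s"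
    using L by (simp_all add: eigen_labeling_def band_dim)
  obtain B P Q where sd: "schur_decomposition ?A ls = (B,P,Q)" by (cases "schur_decomposition ?A ls") auto
  from schur_decomposition[OF A cp sd] have sim: "similar_mat_wit ?A B P Q"
    and ut: "upper_triangular B" and dg: "diag_mat B = ls" by auto
  have B: "B \<in> carrier_mat (2*s) (2*s)" using similar_mat_witD2[OF A sim] by blast
  have "trc (?A ^\<^sub>m k) = trc (B ^\<^sub>m k)" by (rule trc_sim[OF sim])
  also have "\<dots> = (\<Sum>i<2*s. B $$ (i,i) ^ k)"
    using ut_pow[OF B ut, of k] B unfolding trc_def by simp
  also have "\<dots> = (\<Sum>i<2*s. (ls!i)^k)"
    using dg B unfolding diag_mat_def by (intro sum.cong refl) auto
  finally have e1: "trc (?A ^\<^sub>m k) = (\<Sum>i<2*s. (ls!i)^k)" .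
  have "trc (?A ^\<^sub>m k) = (\<Sum>i<2*s. complex_of_real (Mp s k i i))"
    unfolding trc_def using A by (intro sum.cong) (auto simp: Ac_pow)
  then show ?thesis using e1 by simp
qed

lemma labeling_eigenvalue:
  assumes L: "eigen_labeling (band_mat s) ls" and x: "x \<in> set ls"
  shows "eigenvalue (map_mat complex_of_real (band_mat s)) x"
proof -
  let ?A = "map_mat complex_of_real (band_mat s)"
  have cp: "char_poly ?A = (\<Prod>a\<leftarrow>ls. [:- a, 1:])"
    using L by (auto simp: eigen_labeling_def)
  have "(\<Prod>a\<leftarrow>ls. [:- a, 1:]) = [:- x, 1:] * (\<Prod>a\<leftarrow>remove1 x ls. [:- a, 1:])"
    using x by (rule prod_list_map_remove1)
  then have "poly (char_poly ?A) x = 0" unfolding cp by simp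
  then show ?thesis using eigenvalue_root_char_poly[OF Ac_carrier] by simp
qed

lemma eigen_real:
  assumes ev: "eigenvalue (map_mat complex_of_real (band_mat s)) x"
  shows "Im x = 0"
proof -
  let ?A = "map_mat complex_of_real (band_mat s)"
  obtain v where v: "eigenvector ?A v x" using ev unfolding eigenvalue_def by auto
  have vc: "v \<in> carrier_vec (2*s)" and v0: "v \<noteq> 0\<^sub>v (2*s)" and Av: "?A *\<^sub>v v = x \<cdot>\<^sub>v v"
    using v unfolding eigenvector_def by (auto simp: band_mat_def)
  have Avi: "(?A *\<^sub>v v) $ i = (\<Sum>j<2*s. complex_of_real (aa s i j) * v $ j)" if "i < 2*s" for i
  proof -
    have "(?A *\<^sub>v v) $ i = row ?A i \<bullet> v" using that by (simp add: band_dim)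
    also have "\<dots> = (\<Sum>j\<in>{0..<2*s}. row ?A i $ j * v $ j)" using vc by (simp add: scalar_prod_def)
    also have "\<dots> = (\<Sum>j<2*s. complex_of_real (aa s i j) * v $ j)"
      using that by (auto simp: atLeast0LessThan band_dim band_idx intro!: sum.cong)
    finally show ?thesis .
  qed
  define S where "S = (\<Sum>i<2*s. cnj (v $ i) * (\<Sum>j<2*s. complex_of_real (aa s i j) * v $ j))"
  define W where "W = (\<Sum>i<2*s. cnj (v $ i) * v $ i)"
  have SW: "S = x * W"
  proof -
    have "S = (\<Sum>i<2*s. cnj (v $ i) * (x * v $ i))"
      unfolding S_def
    proof (intro sum.cong refl)
      fix i assume "i \<in> {..<2*s}"
      then have "(?A *\<^sub>v v) $ i = x * v $ i" using Av vc by simp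
      then show "cnj (v $ i) * (\<Sum>j<2*s. complex_of_real (aa s i j) * v $ j) = cnj (v $ i) * (x * v $ i)"
        using Avi \<open>i \<in> {..<2*s}\<close> by simp
    qed
    then show ?thesis unfolding W_def by (simp add: sum_distrib_left mult_ac)
  qed
  have "cnj S = (\<Sum>i<2*s. v $ i * (\<Sum>j<2*s. complex_of_real (aa s i j) * cnj (v $ j)))"
    unfolding S_def by (simp add: cnj_sum)
  also have "\<dots> = (\<Sum>i<2*s. \<Sum>j<2*s. cnj (v $ j) * (complex_of_real (aa s j i) * v $ i))"
    by (simp add: sum_distrib_left aa_sym mult_ac)
  also have "\<dots> = S" unfolding S_def
    by (subst sum.swap) (simp add: sum_distrib_left)
  finally have cS: "cnj S = S" .
  have Wr: "W = complex_of_real (\<Sum>i<2*s. (cmod (v $ i))\<^sup>2)"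
    unfolding W_def of_real_sum by (intro sum.cong refl) (metis complex_norm_square mult.commute)
  obtain i where i: "i < 2*s" "v $ i \<noteq> 0"
    using v0 vc by (metis eq_vecI carrier_vecD index_zero_vec(1) index_zero_vec(2))
  have "(cmod (v $ i))\<^sup>2 \<le> (\<Sum>i<2*s. (cmod (v $ i))\<^sup>2)"
    by (rule member_le_sum[where f = "\<lambda>i. (cmod (v $ i))\<^sup>2"]) (use i in auto)
  moreover have "(cmod (v $ i))\<^sup>2 > 0" using i by simp
  ultimately have Wpos: "(\<Sum>i<2*s. (cmod (v $ i))\<^sup>2) > 0" by linarith
  have "cnj x * W = x * W" using cS SW Wr by (simp add: mult.commute)
  moreover have "W \<noteq> 0" using Wpos unfolding Wr by (metis of_real_eq_0_iff less_irrefl)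
  ultimately have "cnj x = x" by simp
  then show ?thesis by (metis Reals_cnj_iff complex_is_Real_iff)
qed

lemma sin_lower: "0 \<le> x \<Longrightarrow> x - x^3/6 \<le> sin (x::real)"
proof -
  assume x: "0 \<le> x"
  have "\<bar>sin x - (\<Sum>m<3. sin_coeff m * x ^ m)\<bar> \<le> inverse (fact 3) * \<bar>x\<bar> ^ 3"
    by (rule Maclaurin_sin_bound)
  moreover have "(\<Sum>m<3. sin_coeff m * x ^ m) = x"
    by (simp only: numeral_3_eq_3 sum.lessThan_Suc) (simp add: sin_coeff_def)
  moreover have "(fact 3 :: real) = 6"
    by (simp only: numeral_3_eq_3 fact_Suc) simp
  moreover have "\<bar>x\<bar> ^ 3 = x^3" using x by simp
  ultimately have "\<bar>sin x - x\<bar> * 6 \<le> x^3" by simp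
  then show ?thesis by (auto simp: abs_if split: if_splits)
qed

lemma pi_ge3: "3 \<le> pi"
  using sin_x_le_x[of "pi/6"] sin_30 by simp

lemma pi_le: "pi \<le> 81/25"
proof -
  define x where "x = pi/6"
  have x0: "0 \<le> x" and x1: "x \<le> 2/3" using pi_less_4 unfolding x_def by auto
  have "x - x^3/6 \<le> 1/2" using sin_lower[OF x0] sin_30 unfolding x_def by simp
  moreover have "x^3 \<le> x * (4/9)"
  proof -
    have "x^2 \<le> (2/3)^2" using x0 x1 by (intro power_mono) auto
    then have "x * x^2 \<le> x * (4/9)" using x0 by (intro mult_left_mono) (auto simp: power2_eq_square)
    then show ?thesis by (simp add: power3_eq_cube power2_eq_square mult_ac)
  qed
  ultimately have "x * (25/27) \<le> 1/2" by linarith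
  then have "x \<le> 27/50" by linarith
  then show ?thesis unfolding x_def by simp
qed

definition mu :: "nat \<Rightarrow> real" where
  "mu s = 1 / (2 * sin (pi / real (4*s+2)))"

lemma theta_facts:
  assumes s: "s \<ge> 1"
  shows "0 < pi / real (4*s+2)" "pi / real (4*s+2) \<le> pi/6" "0 < sin (pi / real (4*s+2))"
proof -
  show "0 < pi / real (4*s+2)" by simp
  show le: "pi / real (4*s+2) \<le> pi/6" using s by (intro divide_left_mono) auto
  have "pi / real (4*s+2) < pi" using le pi_gt_zero by linarith
  then show "0 < sin (pi / real (4*s+2))" by (intro sin_gt_zero) simp_all
qed

lemma mu_lower:
  assumes s: "s \<ge> 1"
  shows "mu s \<ge> (2 * real s + 1) / pi"
proof -
  let ?t = "pi / real (4*s+2)"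
  have t0: "0 < ?t" and st: "0 < sin ?t" using theta_facts[OF s] by auto
  have "sin ?t \<le> ?t" using t0 by (intro sin_x_le_x) simp
  then have "1 / (2 * ?t) \<le> 1 / (2 * sin ?t)" using st by (intro divide_left_mono) auto
  moreover have "1 / (2 * ?t) = (2 * real s + 1) / pi" by (simp add: field_simps)
  ultimately show ?thesis unfolding mu_def by simp
qed

lemma caseA_ineq:
  assumes s: "s \<ge> 1"
  shows "3 * (real s)\<^sup>2 - real s < ((3 * real s - 1)/2)\<^sup>2 + 2 * (mu s)\<^sup>2"
proof -
  have m: "(2 * real s + 1) / pi \<le> mu s" by (rule mu_lower[OF s])
  have p: "(2 * real s + 1) / (81/25) \<le> (2 * real s + 1) / pi"
    using pi_le by (intro divide_left_mono) auto
  have m2: "(2 * real s + 1) / (81/25) \<le> mu s" using m p by linarith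
  have "((2 * real s + 1) / (81/25))\<^sup>2 \<le> (mu s)\<^sup>2"
    by (rule power_mono[OF m2]) simp
  moreover have "3 * (real s)\<^sup>2 - real s < ((3 * real s - 1)/2)\<^sup>2 + 2 * ((2 * real s + 1) / (81/25))\<^sup>2"
    using s by (simp add: power2_eq_square field_simps) (smt (verit) mult_nonneg_nonneg of_nat_0_le_iff)
  ultimately show ?thesis by linarith
qed

lemma caseB_ineq:
  assumes s: "s \<ge> 2"
  shows "(mu s)\<^sup>2 < ((3 * real s - 1)/2)\<^sup>2"
proof -
  define t where "t = pi / real (4*s+2)"
  have s1: "s \<ge> 1" using s by simp
  have t0: "0 < t" and st: "0 < sin t" using theta_facts[OF s1] unfolding t_def by auto
  have tle: "t \<le> 81/250"
  proof -
    have "t \<le> pi / 10" unfolding t_def using s by (intro divide_left_mono) auto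
    then show ?thesis using pi_le by linarith
  qed
  have tge: "t \<ge> 3 / real (4*s+2)" unfolding t_def using pi_ge3 by (intro divide_right_mono) auto
  have h3: "t^3 \<le> t * (6561/62500)"
  proof -
    have "t^2 \<le> (81/250)^2" using t0 tle by (intro power_mono) auto
    then have "t * t^2 \<le> t * (81/250)^2" using t0 by (intro mult_left_mono) auto
    then show ?thesis by (simp add: power3_eq_cube power2_eq_square mult_ac)
  qed
  have h4: "t - t^3/6 \<le> sin t" by (rule sin_lower) (use t0 in simp)
  have h5: "t * (49/50) \<le> sin t" using h3 h4 t0 by linarith
  moreover have "3 / real (4*s+2) * (49/50) \<le> t * (49/50)" using tge by (rule mult_right_mono) simp
  ultimately have sl: "3 / real (4*s+2) * (49/50) \<le> sin t" by linarith
  have "1 < (3 * real s - 1) * (3 / real (4*s+2) * (49/50))"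
    using s by (simp add: field_simps)
  also have "\<dots> \<le> (3 * real s - 1) * sin t" using sl s by (intro mult_left_mono) auto
  finally have key: "1 < (3 * real s - 1) * sin t" .
  have "mu s < (3 * real s - 1)/2" unfolding mu_def t_def[symmetric] using key st by (simp add: field_simps)
  moreover have "0 \<le> mu s" unfolding mu_def t_def[symmetric] using st by simp
  ultimately show ?thesis by (intro power_strict_mono) auto
qed

lemma mu_formula:
  assumes s: "s \<ge> 1"
  shows "1 / sqrt (2 + 2 * cos (real (2*s) * pi / real (2*s+1))) = mu s"
proof -
  let ?t = "pi / real (4*s+2)"
  have st: "0 < sin ?t" using theta_facts[OF s] by auto
  have "real (2*s) * pi / real (2*s+1) = pi - 2 * ?t" by (simp add: field_simps)
  then have "cos (real (2*s) * pi / real (2*s+1)) = - cos (2 * ?t)" by simp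
  also have "cos (2 * ?t) = 1 - 2 * (sin ?t)\<^sup>2" by (rule cos_double_sin)
  finally have "2 + 2 * cos (real (2*s) * pi / real (2*s+1)) = (2 * sin ?t)\<^sup>2"
    by (simp add: power2_eq_square)
  moreover have "\<bar>2 * sin ?t\<bar> = 2 * sin ?t" using st by simp
  then have "sqrt ((2 * sin ?t)\<^sup>2) = 2 * sin ?t"
    by (simp only: real_sqrt_abs)
  ultimately have "sqrt (2 + 2 * cos (real (2*s) * pi / real (2*s+1))) = 2 * sin ?t"
    by simp
  then show ?thesis unfolding mu_def by simp
qed

lemma mu_1: "mu 1 = 1"
  unfolding mu_def using sin_30 by simp

lemma band_u_idx:
  assumes j: "j < 2*s"
  shows "band_u s $ j = uf s (pi / real (4*s+2)) j"
  using j by (simp add: band_u_def band_u_base_def uf_def)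

lemma uvec_idx:
  assumes j: "j < 2*s"
  shows "map_vec complex_of_real (band_u s) $ j = complex_of_real (uf s (pi / real (4*s+2)) j)"
proof -
  have "dim_vec (band_u s) = 2*s" by (simp add: band_u_def)
  then have "map_vec complex_of_real (band_u s) $ j = complex_of_real (band_u s $ j)" using j by simp
  then show ?thesis using band_u_idx[OF j] by simp
qed

lemma uvec_dim: "dim_vec (map_vec complex_of_real (band_u s)) = 2*s"
  by (simp add: band_u_def)

lemma Au_idx:
  assumes i: "i < 2*s"
  shows "(map_mat complex_of_real (band_mat s) *\<^sub>v map_vec complex_of_real (band_u s)) $ i
     = complex_of_real (\<Sum>j<2*s. aa s i j * uf s (pi / real (4*s+2)) j)"
proof -
  let ?A = "map_mat complex_of_real (band_mat s)"
  let ?u = "map_vec complex_of_real (band_u s)"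
  have "(?A *\<^sub>v ?u) $ i = row ?A i \<bullet> ?u" using i by (simp add: band_dim)
  also have "\<dots> = (\<Sum>j\<in>{0..<2*s}. row ?A i $ j * ?u $ j)" unfolding scalar_prod_def uvec_dim ..
  also have "\<dots> = (\<Sum>j<2*s. complex_of_real (aa s i j * uf s (pi / real (4*s+2)) j))"
    unfolding atLeast0LessThan
  proof (rule sum.cong[OF refl])
    fix j assume "j \<in> {..<2*s}"
    then have j: "j < 2*s" by simp
    have "row ?A i $ j = complex_of_real (aa s i j)" using i j by (simp add: band_dim band_idx)
    then show "row ?A i $ j * ?u $ j = complex_of_real (aa s i j * uf s (pi / real (4*s+2)) j)"
      using uvec_idx[OF j] by simp
  qed
  also have "\<dots> = complex_of_real (\<Sum>j<2*s. aa s i j * uf s (pi / real (4*s+2)) j)" by simp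
  finally show ?thesis .
qed

lemma Au_eq:
  assumes s: "s \<ge> 1" and i: "i < 2*s"
  shows "(\<Sum>j<2*s. aa s i j * uf s (pi / real (4*s+2)) j) = mu s * uf s (pi / real (4*s+2)) i"
proof -
  define t where "t = pi / real (4*s+2)"
  have ht: "real (4*s+2) * t = pi" unfolding t_def by simp
  have st: "0 < sin t" using theta_facts[OF s] unfolding t_def by auto
  have r: "2 * sin t * (\<Sum>j<2*s. aa s i j * uf s t j) = uf s t i" by (rule row_all[OF ht i])
  have m: "mu s = 1 / (2 * sin t)" unfolding mu_def t_def ..
  have "(\<Sum>j<2*s. aa s i j * uf s t j) = uf s t i / (2 * sin t)"
    using r st by (simp add: field_simps)
  then show ?thesis unfolding m t_def[symmetric] by simp
qed

lemma eigvec: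
  assumes s: "s \<ge> 1"
  shows "eigenvector (map_mat complex_of_real (band_mat s)) (map_vec complex_of_real (band_u s))
           (complex_of_real (mu s))"
proof -
  define t where "t = pi / real (4*s+2)"
  let ?A = "map_mat complex_of_real (band_mat s)"
  let ?u = "map_vec complex_of_real (band_u s)"
  have u0: "?u $ 0 \<noteq> 0"
  proof -
    have "uf s t 0 = cos t" using s by (simp add: uf_def)
    moreover have "cos t > 0"
    proof -
      have t0: "0 < t" and tl: "t \<le> pi/6" using theta_facts[OF s] unfolding t_def by auto
      have "t < pi/2" using tl pi_gt_zero by linarith
      then show ?thesis using t0 by (intro cos_gt_zero) auto
    qed
    moreover have "?u $ 0 = complex_of_real (uf s t 0)" using uvec_idx[of 0 s] s unfolding t_def by simp
    ultimately show ?thesis by simp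
  qed
  have nz: "?u \<noteq> 0\<^sub>v (2*s)"
  proof
    assume "?u = 0\<^sub>v (2*s)"
    then have "?u $ 0 = 0" using s by simp
    then show False using u0 by simp
  qed
  have Au: "?A *\<^sub>v ?u = complex_of_real (mu s) \<cdot>\<^sub>v ?u"
  proof (rule eq_vecI)
    show "dim_vec (?A *\<^sub>v ?u) = dim_vec (complex_of_real (mu s) \<cdot>\<^sub>v ?u)"
      unfolding index_smult_vec(2) uvec_dim by (simp add: band_dim)
    fix i assume "i < dim_vec (complex_of_real (mu s) \<cdot>\<^sub>v ?u)"
    then have i: "i < 2*s" unfolding index_smult_vec(2) uvec_dim .
    have "(?A *\<^sub>v ?u) $ i = complex_of_real (mu s * uf s t i)"
      unfolding Au_idx[OF i] Au_eq[OF s i] t_def ..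
    also have "\<dots> = (complex_of_real (mu s) \<cdot>\<^sub>v ?u) $ i"
      using i uvec_idx[OF i] uvec_dim[of s] unfolding t_def by simp
    finally show "(?A *\<^sub>v ?u) $ i = (complex_of_real (mu s) \<cdot>\<^sub>v ?u) $ i" .
  qed
  have uc: "?u \<in> carrier_vec (dim_row ?A)" unfolding carrier_vec_def using uvec_dim[of s] by (simp add: band_dim)
  show ?thesis unfolding eigenvector_def using uc nz Au by (simp add: band_dim)
qed

lemma poly_prod_root:
  fixes x :: complex
  shows "poly (\<Prod>a\<leftarrow>ls. [:- a, 1:]) x = 0 \<Longrightarrow> x \<in> set ls"
proof (induction ls)
  case Nil
  then show ?case by simp
next
  case (Cons a ls)
  then have "(x - a) * poly (\<Prod>a\<leftarrow>ls. [:- a, 1:]) x = 0" by (simp add: algebra_simps)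
  then show ?case using Cons.IH by auto
qed

lemma real_pow:
  assumes "Im z = 0"
  shows "z ^ (2*k) = complex_of_real ((cmod z) ^ (2*k))"
proof -
  have z: "z = complex_of_real (Re z)" using assms by (simp add: complex_eq_iff)
  have "cmod z = \<bar>Re z\<bar>" by (subst z) (simp only: norm_of_real)
  then have "(cmod z) ^ (2*k) = (Re z) ^ (2*k)" by (simp add: power_even_abs)
  then show ?thesis by (subst z) simp
qed

lemma q_le:
  fixes q r C :: real
  assumes h: "\<And>k. q^k \<le> C * r^k" and r: "0 \<le> r" and q: "0 < q"
  shows "q \<le> r"
proof (rule ccontr)
  assume "\<not> q \<le> r"
  then have qr: "r < q" by simp
  show False
  proof (cases "r = 0")
    case True
    then show False using h[of 1] q by simp
  next
    case False
    then have r0: "0 < r" using r by simp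
    have "1 < q / r" using qr r0 by simp
    then obtain n where n: "C < (q / r) ^ n" using real_arch_pow by blast
    have "(q/r)^n = q^n / r^n" by (simp add: power_divide)
    then have "C * r^n < q^n" using n r0 by (simp add: field_simps)
    then show False using h[of n] by simp
  qed
qed

lemma ak_trace_bound:
  assumes s: "s \<ge> 1" and L: "eigen_labeling (band_mat s) ls"
    and bound: "\<And>i. i < 2*s \<Longrightarrow> cmod (ls!i) \<le> r"
    and real: "\<And>i. i < 2*s \<Longrightarrow> Im (ls!i) = 0"
  shows "ak s k \<le> real (2*s) * (real (2*s) * (r\<^sup>2)^k)"
proof -
  have "0 < 2*s" using s by simp
  then have "cmod (ls!0) \<le> r" by (rule bound)
  then have r0: "0 \<le> r" using norm_ge_zero[of "ls!0"] by linarith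
  have "complex_of_real (\<Sum>i<2*s. Mp s (2*k) i i) = (\<Sum>i<2*s. (ls!i)^(2*k))"
    using labeling_trace[OF L, of "2*k"] by simp
  also have "\<dots> = (\<Sum>i<2*s. complex_of_real ((cmod (ls!i))^(2*k)))"
  proof (rule sum.cong[OF refl])
    fix i assume "i \<in> {..<2*s}"
    then have "Im (ls!i) = 0" using real by simp
    then show "(ls!i)^(2*k) = complex_of_real ((cmod (ls!i))^(2*k))" by (rule real_pow)
  qed
  also have "\<dots> = complex_of_real (\<Sum>i<2*s. (cmod (ls!i))^(2*k))" by (simp only: of_real_sum)
  finally have tr: "(\<Sum>i<2*s. Mp s (k+k) i i) = (\<Sum>i<2*s. (cmod (ls!i))^(2*k))"
    by (simp only: of_real_eq_iff mult_2)
  have "(\<Sum>i<2*s. (cmod (ls!i))^(2*k)) \<le> (\<Sum>i<2*s. r^(2*k))"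
    by (intro sum_mono power_mono bound) auto
  also have "\<dots> = real (2*s) * (r\<^sup>2)^k" by (simp add: power_mult)
  finally have "(\<Sum>i<2*s. Mp s (k+k) i i) \<le> real (2*s) * (r\<^sup>2)^k" using tr by simp
  then have "real (2*s) * (\<Sum>i<2*s. Mp s (k+k) i i) \<le> real (2*s) * (real (2*s) * (r\<^sup>2)^k)"
    by (intro mult_left_mono) auto
  then show ?thesis using ak_upper[of s k] by linarith
qed

lemma Mp_double: "(\<Sum>i<2*s. Mp s (k+k) i i) = (\<Sum>i<2*s. \<Sum>j<2*s. (Mp s k i j)\<^sup>2)"
  by (intro sum.cong refl, subst Mp_add) (auto intro!: sum.cong simp: power2_eq_square Mp_sym)

lemma second:
  assumes s: "s \<ge> 1" and L: "eigen_labeling (band_mat s) ls"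
  shows "ls!1 = complex_of_real (mu s)"
proof -
  let ?A = "map_mat complex_of_real (band_mat s)"
  have len: "length ls = 2*s" and sw: "sorted_wrt (\<lambda>a b. cmod a \<ge> cmod b) ls"
    and cp: "char_poly ?A = (\<Prod>a\<leftarrow>ls. [:- a, 1:])"
    using L by (auto simp: eigen_labeling_def band_dim)
  have real: "Im (ls!i) = 0" if i: "i < 2*s" for i
  proof -
    have "ls!i \<in> set ls" using i len by simp
    then have "eigenvalue ?A (ls!i)" by (rule labeling_eigenvalue[OF L])
    then show ?thesis by (rule eigen_real)
  qed
  have bound: "cmod (ls!i) \<le> cmod (ls!0)" if i: "i < 2*s" for i
  proof (cases "i = 0")
    case True
    then show ?thesis by simp
  next
    case False
    then show ?thesis using sorted_wrt_nth_less[OF sw, of 0 i] i len by simp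
  qed
  define rho where "rho = cmod (ls!0)"
  define q where "q = ak s 1 / ak s 0"
  have a0: "ak s 0 = real (2*s)" by (rule ak0)
  have qpos: "0 < q" unfolding q_def using ak_pos[OF s, of 0] ak_pos[OF s, of 1] by simp
  have qk: "q^k \<le> real (2*s) * (rho\<^sup>2)^k" for k
  proof -
    have "real (2*s) * q^k \<le> ak s k" using ak_lower[OF s, of k] unfolding q_def a0 by simp
    also have "\<dots> \<le> real (2*s) * (real (2*s) * (rho\<^sup>2)^k)"
      unfolding rho_def by (rule ak_trace_bound[OF s L bound real])
    finally show ?thesis using s by simp
  qed
  have qrho: "q \<le> rho\<^sup>2" by (rule q_le[OF qk _ qpos]) simp
  have qlow: "((3 * real s - 1)/2)\<^sup>2 \<le> q"
  proof -
    have h: "(3 * (real s)\<^sup>2 - real s)\<^sup>2 \<le> real (2*s) * ak s 1" by (rule ak1_lower[OF s])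
    have "((3 * real s - 1)/2)\<^sup>2 = (3 * (real s)\<^sup>2 - real s)\<^sup>2 / (real (2*s))\<^sup>2"
      using s by (simp add: power2_eq_square field_simps)
    also have "\<dots> \<le> (real (2*s) * ak s 1) / (real (2*s))\<^sup>2"
      using h by (intro divide_right_mono) auto
    also have "\<dots> = q" unfolding q_def a0 using s by (simp add: power2_eq_square field_simps)
    finally show ?thesis .
  qed
  have tsq: "(\<Sum>i<2*s. (cmod (ls!i))\<^sup>2) = 3 * (real s)\<^sup>2 - real s"
  proof -
    have "complex_of_real (\<Sum>i<2*s. Mp s (2*1) i i) = (\<Sum>i<2*s. (ls!i)^(2*1))"
      using labeling_trace[OF L, of "2*1"] by simp
    also have "\<dots> = (\<Sum>i<2*s. complex_of_real ((cmod (ls!i))^(2*1)))"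
    proof (rule sum.cong[OF refl])
      fix i assume "i \<in> {..<2*s}"
      then have "Im (ls!i) = 0" using real by simp
      then show "(ls!i)^(2*1) = complex_of_real ((cmod (ls!i))^(2*1))" by (rule real_pow)
    qed
    also have "\<dots> = complex_of_real (\<Sum>i<2*s. (cmod (ls!i))^(2*1))" by (simp only: of_real_sum)
    finally have e: "(\<Sum>i<2*s. Mp s (1+1) i i) = (\<Sum>i<2*s. (cmod (ls!i))\<^sup>2)"
      by (simp only: of_real_eq_iff mult_2 one_add_one)
    have "(\<Sum>i<2*s. Mp s (1+1) i i) = (\<Sum>i<2*s. \<Sum>j<2*s. (Mp s 1 i j)\<^sup>2)" by (rule Mp_double)
    also have "\<dots> = (\<Sum>i<2*s. \<Sum>j<2*s. aa s i j)"
      by (intro sum.cong refl) (simp add: Mp_1' aa_sq del: Mp.simps)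
    also have "\<dots> = 3 * (real s)\<^sup>2 - real s" by (rule Ntot)
    finally show ?thesis using e by simp
  qed
  have mupos: "0 < mu s" unfolding mu_def using theta_facts[OF s] by simp
  have "eigenvalue ?A (complex_of_real (mu s))" unfolding eigenvalue_def using eigvec[OF s] by blast
  then have "poly (char_poly ?A) (complex_of_real (mu s)) = 0"
    using eigenvalue_root_char_poly[OF Ac_carrier] by simp
  then have "complex_of_real (mu s) \<in> set ls" unfolding cp by (rule poly_prod_root)
  then obtain j where j: "j < 2*s" "ls!j = complex_of_real (mu s)" using len by (auto simp: in_set_conv_nth)
  have cj: "cmod (ls!j) = mu s" using j mupos by simp
  consider "j = 1" | "j = 0" | "j \<ge> 2" by linarith
  then show ?thesis
  proof cases
    case 1
    then show ?thesis using j by simp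
  next
    case 2
    then have rm: "rho = mu s" unfolding rho_def using cj by simp
    show ?thesis
    proof (cases "s \<ge> 2")
      case True
      have "q \<le> (mu s)\<^sup>2" using qrho rm by simp
      then have False using caseB_ineq[OF True] qlow by linarith
      then show ?thesis ..
    next
      case False
      then have s1: "s = 1" using s by simp
      have "complex_of_real (\<Sum>i<2*s. Mp s 1 i i) = (\<Sum>i<2*s. (ls!i)^1)"
        using labeling_trace[OF L, of 1] by simp
      moreover have "(\<Sum>i<2*s. Mp s 1 i i) = 2"
        using s1 by (simp add: numeral_2_eq_2 Mp_1' aa_def del: Mp.simps)
      ultimately have "ls!0 + ls!1 = 2" using s1 by (simp add: numeral_2_eq_2 aa_def)
      moreover have "ls!0 = 1" using j 2 s1 mu_1 by simp
      ultimately show ?thesis using s1 mu_1 by simp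
    qed
  next
    case 3
    have sub: "{0, 1, j} \<subseteq> {..<2*s}" using j s 3 by auto
    have "(\<Sum>i\<in>{0,1,j}. (cmod (ls!i))\<^sup>2) \<le> (\<Sum>i<2*s. (cmod (ls!i))\<^sup>2)"
      by (rule sum_mono2) (use sub in auto)
    moreover have "(\<Sum>i\<in>{0,1,j}. (cmod (ls!i))\<^sup>2) = rho\<^sup>2 + (cmod (ls!1))\<^sup>2 + (mu s)\<^sup>2"
      using 3 cj unfolding rho_def by simp
    moreover have "mu s \<le> cmod (ls!1)" using sorted_wrt_nth_less[OF sw, of 1 j] 3 j len cj by simp
    then have "(mu s)\<^sup>2 \<le> (cmod (ls!1))\<^sup>2" using mupos by (intro power_mono) auto
    ultimately have False using tsq qrho qlow caseA_ineq[OF s] by linarith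
    then show ?thesis ..
  qed
qed

lemma labeling_exists:
  "\<exists>ls. eigen_labeling (band_mat s) ls"
proof -
  let ?A = "map_mat complex_of_real (band_mat s)"
  obtain as where cp: "char_poly ?A = (\<Prod>a\<leftarrow>as. [:- a, 1:])" and len: "length as = 2*s"
    using char_poly_factorized[OF Ac_carrier] by blast
  define ls where "ls = sort_key (\<lambda>a. - cmod a) as"
  have "mset ls = mset as" unfolding ls_def by simp
  then have "(\<Prod>a\<leftarrow>ls. [:- a, 1:]) = (\<Prod>a\<leftarrow>as. [:- a, 1:])"
    by (metis mset_map prod_mset_prod_list)
  moreover have "length ls = 2*s" unfolding ls_def using len by simp
  moreover have "sorted_wrt (\<lambda>a b. cmod a \<ge> cmod b) ls"
  proof -
    have "sorted (map (\<lambda>a. - cmod a) ls)" unfolding ls_def by (rule sorted_sort_key)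
    then have "sorted_wrt (\<lambda>x y. - cmod x \<le> - cmod y) ls"
      by (simp add: sorted_wrt_map)
    then show ?thesis by (rule sorted_wrt_mono_rel[rotated]) simp
  qed
  ultimately have "eigen_labeling (band_mat s) ls"
    unfolding eigen_labeling_def using cp by (simp add: band_dim)
  then show ?thesis by blast
qed

theorem theorem6:
  fixes s :: nat
  assumes "s \<ge> 1"
  shows "(\<exists>ls. eigen_labeling (band_mat s) ls) \<and>
         (\<forall>ls. eigen_labeling (band_mat s) ls \<longrightarrow>
            cmod (ls ! 1) = 1 / sqrt (2 + 2 * cos (real (2*s) * pi / real (2*s+1))) \<and>
            eigenvector (map_mat complex_of_real (band_mat s))
                        (map_vec complex_of_real (band_u s)) (ls ! 1))"
proof (intro conjI allI impI)
  show "\<exists>ls. eigen_labeling (band_mat s) ls" by (rule labeling_exists)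
next
  fix ls assume L: "eigen_labeling (band_mat s) ls"
  have e: "ls ! 1 = complex_of_real (mu s)" by (rule second[OF assms L])
  have mupos: "0 < mu s" unfolding mu_def using theta_facts[OF assms] by simp
  show "cmod (ls ! 1) = 1 / sqrt (2 + 2 * cos (real (2*s) * pi / real (2*s+1)))"
    unfolding e mu_formula[OF assms] using mupos by simp
  show "eigenvector (map_mat complex_of_real (band_mat s))
                        (map_vec complex_of_real (band_u s)) (ls ! 1)"
    unfolding e by (rule eigvec[OF assms])
qed

end
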